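(* $\gamma^{L-ID}(\mathcal{S})=\frac{3}{11}$: every local identifying code in the square grid has density at least $3/11$, and there is a local identifying code in the square grid of density $3/11$.
   Context: The square grid $\mathcal{S}$ has vertex set $\mathbb{Z}^2$, with $\mathbf{u},\mathbf{v}$ adjacent iff $\mathbf{u}-\mathbf{v}\in\{(\pm1,0),(0,\pm1)\}$. For a nonempty $C\subseteq\mathbb{Z}^2$ and vertex $\mathbf{u}$, $I(\mathbf{u})=N[\mathbf{u}]\cap C$ where $N[\mathbf{u}]$ is the closed neighbourhood. $C$ is a local identifying code if $I(\mathbf{u})\ne\emptyset$ for all $\mathbf{u}$ and $I(\mathbf{u})\ne I(\mathbf{v})$ for all adjacent $\mathbf{u},\mathbf{v}$. The density of $C$ is $D(C)=\limsup_{n\to\infty}|C\cap Q_n|/|Q_n|$ with $Q_n=\{(i,j)\in\mathbb{Z}^2:|i|\le n,|j|\le n\}$. $\gamma^{L-ID}(G)$ denotes the smallest density of a local identifying code in $G$. *)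

theory Defs
  imports "HOL-Analysis.Analysis" "HOL-Library.Liminf_Limsup"
begin

type_synonym vtx = "int \<times> int"

definition sq_adj :: "vtx \<Rightarrow> vtx \<Rightarrow> bool" where
  "sq_adj u v \<longleftrightarrow> (\<bar>fst u - fst v\<bar> + \<bar>snd u - snd v\<bar> = 1)"

definition closed_nbhd :: "vtx \<Rightarrow> vtx set" where
  "closed_nbhd u = {v. v = u \<or> sq_adj u v}"

definition I_set :: "vtx set \<Rightarrow> vtx \<Rightarrow> vtx set" where
  "I_set C u = closed_nbhd u \<inter> C"

definition local_id_code :: "vtx set \<Rightarrow> bool" where
  "local_id_code C \<longleftrightarrow> C \<noteq> {} \<and>
     (\<forall>u. I_set C u \<noteq> {}) \<and>
     (\<forall>u v. sq_adj u v \<longrightarrow> I_set C u \<noteq> I_set C v)"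

definition Qbox :: "nat \<Rightarrow> vtx set" where
  "Qbox n = {(i, j). \<bar>i\<bar> \<le> int n \<and> \<bar>j\<bar> \<le> int n}"

definition grid_density :: "vtx set \<Rightarrow> ereal" where
  "grid_density C = limsup (\<lambda>n. ereal (real (card (C \<inter> Qbox n)) / real (card (Qbox n))))"

definition gamma_LID_square :: ereal where
  "gamma_LID_square = (INF C \<in> {C. local_id_code C}. grid_density C)"

end

theory Submission
  imports Defs "HOL-Real_Asymp.Real_Asymp"
begin

definition DD :: "vtx set" where "DD = {(1,0),(-1,0),(0,1),(0,-1)}"
definition mv :: "vtx \<Rightarrow> vtx \<Rightarrow> vtx" where "mv u d = (fst u + fst d, snd u + snd d)"
definition ng :: "vtx \<Rightarrow> vtx" where "ng d = (- fst d, - snd d)"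

lemma DD_fin[simp]: "finite DD" by (simp add: DD_def)
lemma DD_card: "card DD = 4" by (simp add: DD_def)
lemma ng_DD: "d \<in> DD \<Longrightarrow> ng d \<in> DD" by (auto simp: DD_def ng_def)
lemma mv_ng[simp]: "mv (mv c e) (ng e) = c" by (simp add: mv_def ng_def)
lemma mv_inj: "inj (mv u)" by (auto simp: inj_def mv_def prod_eq_iff)
lemma mv_inj2: "inj (\<lambda>u. mv u d)" by (auto simp: inj_def mv_def prod_eq_iff)
lemma mv_neq: "d \<in> DD \<Longrightarrow> mv u d \<noteq> u" by (auto simp: DD_def mv_def prod_eq_iff)

lemma sum_ng: "(\<Sum>d\<in>DD. f (ng d)) = (\<Sum>d\<in>DD. f d)"
proof -
  have "ng ` DD = DD" by (auto simp: DD_def ng_def image_def)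
  moreover have "inj ng" by (auto simp: inj_def ng_def prod_eq_iff)
  ultimately have "(\<Sum>d\<in>DD. f d) = (\<Sum>d\<in>DD. f (ng d))" using sum.reindex[of ng DD f] inj_on_subset[of ng UNIV DD] unfolding comp_def by simp
  thus ?thesis by simp
qed

lemma sq_adj_iff: "sq_adj u v \<longleftrightarrow> (\<exists>d\<in>DD. v = mv u d)"
proof -
  obtain a b where u: "u = (a,b)" by (cases u)
  obtain c e where v: "v = (c,e)" by (cases v)
  show ?thesis unfolding u v sq_adj_def DD_def mv_def by (auto simp: abs_if)
qed

lemma sq_adj_sym: "sq_adj u v \<Longrightarrow> sq_adj v u" by (auto simp: sq_adj_def abs_minus_commute)

lemma nbhd_eq: "closed_nbhd u = insert u (mv u ` DD)"
  by (auto simp: closed_nbhd_def sq_adj_iff)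

lemma nbhd_fin[simp]: "finite (closed_nbhd u)" by (simp add: nbhd_eq)
lemma I_fin[simp]: "finite (I_set C u)" by (simp add: I_set_def)

definition ind :: "vtx set \<Rightarrow> vtx \<Rightarrow> real" where "ind C p = of_bool (p \<in> C)"
definition kk :: "vtx set \<Rightarrow> vtx \<Rightarrow> real" where "kk C u = real (card (I_set C u))"
definition deg :: "vtx set \<Rightarrow> vtx \<Rightarrow> real" where "deg C u = real (card {d\<in>DD. mv u d \<in> C})"

lemma deg_sum: "deg C u = (\<Sum>d\<in>DD. ind C (mv u d))"
proof -
  have "{d\<in>DD. mv u d \<in> C} = DD \<inter> {d. mv u d \<in> C}" by auto
  thus ?thesis unfolding deg_def ind_def by simp
qed

lemma kk_eq: "kk C u = ind C u + deg C u"
proof -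
  have "I_set C u = closed_nbhd u \<inter> {p. p \<in> C}" by (auto simp: I_set_def)
  hence "kk C u = (\<Sum>p\<in>closed_nbhd u. ind C p)" unfolding kk_def ind_def by simp
  also have "\<dots> = ind C u + (\<Sum>p\<in>mv u ` DD. ind C p)"
    unfolding nbhd_eq using mv_neq[of _ u] by (subst sum.insert) (auto, metis)
  also have "(\<Sum>p\<in>mv u ` DD. ind C p) = deg C u"
    unfolding deg_sum by (subst sum.reindex) (auto intro: inj_on_subset[OF mv_inj])
  finally show ?thesis .
qed

lemma ind01: "ind C p = 0 \<or> ind C p = 1" by (simp add: ind_def)
lemma ind_ge: "0 \<le> ind C p" "ind C p \<le> 1" by (auto simp: ind_def)
lemma deg_le: "deg C u \<le> 4"
  unfolding deg_def using card_mono[of DD "{d\<in>DD. mv u d \<in> C}"] DD_card by auto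
lemma deg_ge: "0 \<le> deg C u" by (simp add: deg_def)
lemma kk_le: "kk C u \<le> 5" using kk_eq[of C u] deg_le[of C u] ind_ge[of C u] by linarith
lemma kk_ge0: "0 \<le> kk C u" by (simp add: kk_def)

lemma deg_pos: "e \<in> DD \<Longrightarrow> mv u e \<in> C \<Longrightarrow> deg C u \<ge> 1"
proof -
  assume "e \<in> DD" "mv u e \<in> C"
  hence "{d\<in>DD. mv u d \<in> C} \<noteq> {}" by blast
  hence "card {d\<in>DD. mv u d \<in> C} \<noteq> 0" by simp
  thus ?thesis unfolding deg_def by linarith
qed

lemma in_I: "p \<in> closed_nbhd u \<Longrightarrow> p \<in> C \<Longrightarrow> p \<in> I_set C u" by (simp add: I_set_def)
lemma self_nb: "u \<in> closed_nbhd u" by (simp add: closed_nbhd_def)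
lemma mv_nb: "e \<in> DD \<Longrightarrow> mv u e \<in> closed_nbhd u" by (simp add: nbhd_eq)
lemma mv_adj: "e \<in> DD \<Longrightarrow> sq_adj u (mv u e)" by (auto simp: sq_adj_iff)

lemma card_I_1: "card A = 1 \<Longrightarrow> x \<in> A \<Longrightarrow> A = {x}"
  by (metis card_1_singletonE singletonD)

lemma L1: "local_id_code C \<Longrightarrow> kk C u \<ge> 1"
proof -
  assume "local_id_code C"
  hence "I_set C u \<noteq> {}" unfolding local_id_code_def by blast
  hence "card (I_set C u) \<noteq> 0" by simp
  thus ?thesis unfolding kk_def by linarith
qed

lemma lid_sep: "local_id_code C \<Longrightarrow> sq_adj u v \<Longrightarrow> I_set C u \<noteq> I_set C v"
  unfolding local_id_code_def by blast

lemma kk_self: "c \<in> C \<Longrightarrow> kk C c = 1 + deg C c" by (simp add: kk_eq ind_def)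

lemma L2: assumes "local_id_code C" "c \<in> C" "deg C c = 0" "e \<in> DD"
  shows "kk C (mv c e) \<ge> 2"
proof (rule ccontr)
  let ?u = "mv c e"
  assume "\<not> ?thesis"
  with L1[OF assms(1), of ?u] have "card (I_set C ?u) = 1" unfolding kk_def by linarith
  moreover have "c \<in> I_set C ?u"
    by (rule in_I) (use assms ng_DD mv_nb[of "ng e" ?u] in auto)
  ultimately have A: "I_set C ?u = {c}" by (rule card_I_1)
  have "card (I_set C c) = 1" using kk_self[OF assms(2)] assms(3) unfolding kk_def by simp
  moreover have "c \<in> I_set C c" by (rule in_I[OF self_nb assms(2)])
  ultimately have B: "I_set C c = {c}" by (rule card_I_1)
  have "sq_adj c ?u" using assms(4) by (rule mv_adj)
  with A B lid_sep[OF assms(1)] show False by metis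
qed

lemma L3: assumes "local_id_code C" "c \<in> C" "deg C c = 1" "e \<in> DD" "mv c e \<in> C"
  shows "deg C (mv c e) \<ge> 2"
proof (rule ccontr)
  let ?v = "mv c e"
  assume "\<not> ?thesis"
  moreover have "deg C ?v \<ge> 1" using deg_pos[of "ng e" ?v C] ng_DD assms by auto
  moreover have "\<exists>k::nat. deg C ?v = real k" by (simp add: deg_def)
  ultimately have dv: "deg C ?v = 1" by auto
  have cv: "c \<noteq> ?v" using mv_neq[OF assms(4), of c] by auto
  have "card (I_set C c) = 2" using kk_self[OF assms(2)] assms(3) unfolding kk_def by simp
  moreover have "{c, ?v} \<subseteq> I_set C c"
    using in_I[OF self_nb assms(2)] in_I[OF mv_nb[OF assms(4)] assms(5)] by blast
  ultimately have A: "I_set C c = {c, ?v}" using cv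
    by (metis I_fin card_2_iff card_subset_eq)
  have "card (I_set C ?v) = 2" using kk_self[OF assms(5)] dv unfolding kk_def by simp
  moreover have "{c, ?v} \<subseteq> I_set C ?v"
    using in_I[OF self_nb assms(5)] in_I[OF mv_nb[OF ng_DD[OF assms(4)], of ?v, simplified] assms(2)] by blast
  ultimately have B: "I_set C ?v = {c, ?v}" using cv
    by (metis I_fin card_2_iff card_subset_eq)
  have "sq_adj c ?v" using assms(4) by (rule mv_adj)
  with A B lid_sep[OF assms(1)] show False by metis
qed

definition w :: "vtx set \<Rightarrow> vtx \<Rightarrow> vtx \<Rightarrow> real" where
  "w C u c = (if u \<in> C \<and> c \<in> C \<and> deg C c = 1 then 1/6 else 1 / kk C u)"
definition self :: "vtx set \<Rightarrow> vtx \<Rightarrow> real" where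
  "self C u = 1 - (\<Sum>d\<in>DD. ind C (mv u d) * w C u (mv u d))"
definition Rc :: "vtx set \<Rightarrow> vtx \<Rightarrow> real" where
  "Rc C c = self C c + (\<Sum>d\<in>DD. w C (mv c d) c)"

lemma w_ge: "0 \<le> w C u c" using kk_ge0[of C u] by (simp add: w_def)

lemma deg_nat: "\<exists>k::nat. deg C u = real k" by (simp add: deg_def)

lemma sum_split: "(\<Sum>e\<in>DD. ind C (mv c e) * a + (1 - ind C (mv c e)) * b) = a * deg C c + b * (4 - deg C c)"
proof -
  have "(\<Sum>e\<in>DD. ind C (mv c e) * a + (1 - ind C (mv c e)) * b)
      = (\<Sum>e\<in>DD. ind C (mv c e)) * a + (\<Sum>e\<in>DD. (1::real)) * b - (\<Sum>e\<in>DD. ind C (mv c e)) * b"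
    by (simp add: sum.distrib sum_subtractf sum_distrib_right sum_distrib_left[symmetric] algebra_simps)
  thus ?thesis by (simp add: DD_card deg_sum[symmetric] algebra_simps)
qed

lemma bound: assumes lid: "local_id_code C" and cC: "c \<in> C"
  shows "Rc C c \<le> 11/3"
proof -
  define g where "g = deg C c"
  define a where "a = (if g = 1 then 1/6 else (1/2::real))"
  define b where "b = (if g = 0 then 1/2 else (1::real))"
  have kc: "kk C c = 1 + g" using kk_self[OF cC] g_def by simp
  have P1: "w C (mv c e) c \<le> ind C (mv c e) * a + (1 - ind C (mv c e)) * b" if e: "e \<in> DD" for e
  proof (cases "mv c e \<in> C")
    case True
    have "deg C (mv c e) \<ge> 1" using deg_pos[OF ng_DD[OF e], of "mv c e" C] cC by simp
    hence "kk C (mv c e) \<ge> 2" using kk_self[OF True] by simp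
    hence "1 / kk C (mv c e) \<le> 1/2" by (simp add: field_simps)
    thus ?thesis using True cC by (auto simp: w_def a_def ind_def g_def)
  next
    case False
    have k1: "kk C (mv c e) \<ge> 1" by (rule L1[OF lid])
    have "g = 0 \<Longrightarrow> kk C (mv c e) \<ge> 2" using L2[OF lid cC _ e] g_def by simp
    hence "1 / kk C (mv c e) \<le> b" using k1 by (auto simp: b_def field_simps)
    thus ?thesis using False by (simp add: w_def ind_def)
  qed
  have "(\<Sum>d\<in>DD. w C (mv c d) c) \<le> (\<Sum>e\<in>DD. ind C (mv c e) * a + (1 - ind C (mv c e)) * b)"
    by (rule sum_mono) (rule P1)
  hence S1: "(\<Sum>d\<in>DD. w C (mv c d) c) \<le> a * g + b * (4 - g)"
    using sum_split[of C c a b] g_def by simp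
  obtain k::nat where gk: "g = real k" using deg_nat g_def by blast
  show ?thesis
  proof (cases "k = 0")
    case True
    have "ind C (mv c d) * w C c (mv c d) = 0" if "d \<in> DD" for d
      using deg_pos[OF that, of c C] gk True g_def by (auto simp: ind_def)
    hence "(\<Sum>d\<in>DD. ind C (mv c d) * w C c (mv c d)) = 0" by (intro sum.neutral) blast
    hence "self C c = 1" by (simp add: self_def)
    thus ?thesis using S1 gk True by (simp add: Rc_def a_def b_def)
  next
    case False
    note k0 = False
    show ?thesis
    proof (cases "k = 1")
      case True
      have "ind C (mv c d) * w C c (mv c d) = ind C (mv c d) * (1/2)" if d: "d \<in> DD" for d
      proof (cases "mv c d \<in> C")
        case True
        have "deg C (mv c d) \<ge> 2" using L3[OF lid cC _ d True] gk \<open>k=1\<close> g_def by simp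
        thus ?thesis using kc gk \<open>k=1\<close> by (simp add: w_def)
      qed (simp add: ind_def)
      hence "(\<Sum>d\<in>DD. ind C (mv c d) * w C c (mv c d)) = (\<Sum>d\<in>DD. ind C (mv c d) * (1/2))"
        by (rule sum.cong[OF refl])
      moreover have "(\<Sum>d\<in>DD. ind C (mv c d) * (1/2)) = g/2"
        unfolding g_def deg_sum sum_distrib_right[symmetric] by simp
      ultimately have "self C c = 1 - g/2" by (simp add: self_def)
      thus ?thesis using S1 gk True by (simp add: Rc_def a_def b_def)
    next
      case False
      have gg: "g \<ge> 2" using k0 False gk by simp
      have "ind C (mv c d) * (1/6) \<le> ind C (mv c d) * w C c (mv c d)" if d: "d \<in> DD" for d
      proof (cases "mv c d \<in> C")
        case True
        have "kk C c \<le> 5" by (rule kk_le)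
        moreover have "kk C c \<ge> 1" using kc g_def deg_ge by simp
        ultimately have "1/6 \<le> 1 / kk C c" by (simp add: field_simps)
        thus ?thesis by (simp add: w_def ind_def)
      qed (simp add: ind_def)
      hence "(\<Sum>d\<in>DD. ind C (mv c d) * (1/6)) \<le> (\<Sum>d\<in>DD. ind C (mv c d) * w C c (mv c d))"
        by (rule sum_mono)
      moreover have "(\<Sum>d\<in>DD. ind C (mv c d) * (1/6)) = g/6"
        unfolding g_def deg_sum sum_distrib_right[symmetric] by simp
      ultimately have "self C c \<le> 1 - g/6" by (simp add: self_def)
      thus ?thesis using S1 gg gk k0 False by (simp add: Rc_def a_def b_def)
    qed
  qed
qed

lemma mv_ng2[simp]: "mv (mv c (ng e)) e = c" by (simp add: mv_def ng_def)

lemma Qbox_eq: "Qbox n = {-int n..int n} \<times> {-int n..int n}"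
  by (auto simp: Qbox_def)
lemma Qbox_fin[simp]: "finite (Qbox n)" by (simp add: Qbox_eq)
lemma Qbox_card: "card (Qbox n) = (2*n+1)^2"
proof -
  have "card {-int n..int n} = 2*n+1" by simp
  thus ?thesis by (simp add: Qbox_eq card_cartesian_product power2_eq_square)
qed
lemma Qbox_mv: "u \<in> Qbox n \<Longrightarrow> d \<in> DD \<Longrightarrow> mv u d \<in> Qbox (Suc n)"
  by (auto simp: Qbox_def DD_def mv_def)
lemma Qbox_mono: "Qbox n \<subseteq> Qbox (Suc n)" by (auto simp: Qbox_def)

lemma vertex_id: assumes lid: "local_id_code C"
  shows "ind C u * self C u + (\<Sum>d\<in>DD. ind C (mv u d) * w C u (mv u d)) = 1"
proof (cases "u \<in> C")
  case True thus ?thesis by (simp add: ind_def self_def)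
next
  case False
  have "(\<Sum>d\<in>DD. ind C (mv u d) * w C u (mv u d)) = (\<Sum>d\<in>DD. ind C (mv u d) * (1 / kk C u))"
    using False by (intro sum.cong) (auto simp: w_def)
  also have "\<dots> = deg C u / kk C u" by (simp add: deg_sum sum_divide_distrib)
  also have "\<dots> = 1" using L1[OF lid, of u] kk_eq[of C u] False by (simp add: ind_def)
  finally show ?thesis using False by (simp add: ind_def)
qed

lemma self_nonneg: "0 \<le> ind C u * self C u"
proof (cases "u \<in> C")
  case True
  have kc: "kk C u = 1 + deg C u" using kk_self[OF True] .
  have "ind C (mv u d) * w C u (mv u d) \<le> ind C (mv u d) * (1 / kk C u)" for d
  proof -
    have "1/6 \<le> 1 / kk C u" using kk_le[of C u] kc deg_ge[of C u] by (simp add: field_simps)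
    hence "w C u (mv u d) \<le> 1 / kk C u" by (simp add: w_def)
    from mult_left_mono[OF this ind_ge(1)] show ?thesis .
  qed
  hence "(\<Sum>d\<in>DD. ind C (mv u d) * w C u (mv u d)) \<le> (\<Sum>d\<in>DD. ind C (mv u d) * (1 / kk C u))"
    by (intro sum_mono)
  also have "\<dots> = deg C u / kk C u" by (simp add: deg_sum sum_divide_distrib)
  also have "\<dots> \<le> 1" using kc deg_ge[of C u] by (simp add: field_simps)
  finally show ?thesis using True by (simp add: ind_def self_def)
qed (simp add: ind_def)

lemma shift_sum: assumes d: "d \<in> DD"
  shows "(\<Sum>u\<in>Qbox n. ind C (mv u d) * w C u (mv u d))
       \<le> (\<Sum>c\<in>Qbox (Suc n). ind C c * w C (mv c (ng d)) c)"
proof -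
  have "(\<Sum>u\<in>Qbox n. ind C (mv u d) * w C u (mv u d))
       = (\<Sum>c\<in>(\<lambda>u. mv u d) ` Qbox n. ind C c * w C (mv c (ng d)) c)"
  proof -
    have "inj_on (\<lambda>u. mv u d) (Qbox n)" using mv_inj2 by (rule inj_on_subset) simp
    thus ?thesis by (simp add: sum.reindex)
  qed
  also have "\<dots> \<le> (\<Sum>c\<in>Qbox (Suc n). ind C c * w C (mv c (ng d)) c)"
    by (rule sum_mono2) (use Qbox_mv[OF _ d] ind_ge w_ge in auto)
  finally show ?thesis .
qed

lemma counting: assumes lid: "local_id_code C"
  shows "real (card (Qbox n)) \<le> 11/3 * real (card (C \<inter> Qbox (Suc n)))"
proof -
  let ?Q = "Qbox n" and ?Q' = "Qbox (Suc n)"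
  have "real (card ?Q) = (\<Sum>u\<in>?Q. (1::real))" by simp
  also have "\<dots> = (\<Sum>u\<in>?Q. ind C u * self C u + (\<Sum>d\<in>DD. ind C (mv u d) * w C u (mv u d)))"
    using vertex_id[OF lid] by simp
  also have "\<dots> = (\<Sum>u\<in>?Q. ind C u * self C u) + (\<Sum>d\<in>DD. \<Sum>u\<in>?Q. ind C (mv u d) * w C u (mv u d))"
    by (simp add: sum.distrib sum.swap[of _ DD])
  also have "\<dots> \<le> (\<Sum>c\<in>?Q'. ind C c * self C c) + (\<Sum>d\<in>DD. \<Sum>c\<in>?Q'. ind C c * w C (mv c (ng d)) c)"
  proof (rule add_mono)
    show "(\<Sum>u\<in>?Q. ind C u * self C u) \<le> (\<Sum>c\<in>?Q'. ind C c * self C c)"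
      by (rule sum_mono2) (use Qbox_mono self_nonneg in auto)
    show "(\<Sum>d\<in>DD. \<Sum>u\<in>?Q. ind C (mv u d) * w C u (mv u d)) \<le> (\<Sum>d\<in>DD. \<Sum>c\<in>?Q'. ind C c * w C (mv c (ng d)) c)"
      by (rule sum_mono) (rule shift_sum)
  qed
  also have "\<dots> = (\<Sum>c\<in>?Q'. ind C c * Rc C c)"
  proof -
    have "(\<Sum>d\<in>DD. \<Sum>c\<in>?Q'. ind C c * w C (mv c (ng d)) c) = (\<Sum>c\<in>?Q'. \<Sum>d\<in>DD. ind C c * w C (mv c (ng d)) c)"
      by (rule sum.swap)
    also have "\<dots> = (\<Sum>c\<in>?Q'. ind C c * (\<Sum>d\<in>DD. w C (mv c (ng d)) c))"
      by (simp add: sum_distrib_left)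
    also have "\<dots> = (\<Sum>c\<in>?Q'. ind C c * (\<Sum>d\<in>DD. w C (mv c d) c))"
    proof (rule sum.cong[OF refl])
      fix c show "ind C c * (\<Sum>d\<in>DD. w C (mv c (ng d)) c) = ind C c * (\<Sum>d\<in>DD. w C (mv c d) c)"
        using sum_ng[of "\<lambda>d. w C (mv c d) c"] by simp
    qed
    finally show ?thesis by (simp add: Rc_def distrib_left sum.distrib)
  qed
  also have "\<dots> \<le> (\<Sum>c\<in>?Q'. ind C c * (11/3))"
    using bound[OF lid] by (intro sum_mono) (auto simp: ind_def)
  also have "\<dots> = 11/3 * real (card (C \<inter> ?Q'))"
  proof -
    have "?Q' \<inter> {c. c \<in> C} = C \<inter> ?Q'" by auto
    moreover have "(\<Sum>c\<in>?Q'. ind C c * (11/3)) = (\<Sum>c\<in>?Q'. ind C c) * (11/3)"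
      by (rule sum_distrib_right[symmetric])
    moreover have "(\<Sum>c\<in>?Q'. ind C c) = real (card (?Q' \<inter> {c. c \<in> C}))"
      unfolding ind_def by (intro sum_of_bool_eq Qbox_fin)
    ultimately show ?thesis by simp
  qed
  finally show ?thesis .
qed

definition C0 :: "vtx set" where "C0 = {p. (fst p + 3 * snd p) mod 11 \<in> {0,3,6}}"

lemma C0_mem: "(x + a, y + b) \<in> C0 \<longleftrightarrow> (((x + 3*y) mod 11 + (a + 3*b)) mod 11 \<in> {0,3,6})"
proof -
  have e: "x + a + 3*(y+b) = (x + 3*y) + (a + 3*b)" by simp
  have "(x + a + 3*(y+b)) mod 11 = ((x+3*y) mod 11 + (a+3*b)) mod 11" unfolding e by (rule mod_add_left_eq[symmetric])
  thus ?thesis by (simp only: C0_def mem_Collect_eq fst_conv snd_conv)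
qed

lemma cases11: "0 \<le> (t::int) \<Longrightarrow> t < 11 \<Longrightarrow> t = 0 \<or> t = 1 \<or> t = 2 \<or> t = 3 \<or> t = 4 \<or> t = 5 \<or> t = 6 \<or> t = 7 \<or> t = 8 \<or> t = 9 \<or> t = 10"
  by presburger

lemma dom_t: "0 \<le> (t::int) \<Longrightarrow> t < 11 \<Longrightarrow> (t + 0) mod 11 \<in> {0,3,6} \<or> (t + 1) mod 11 \<in> {0,3,6} \<or> (t + -1) mod 11 \<in> {0,3,6}
   \<or> (t + 3) mod 11 \<in> {0,3,6} \<or> (t + -3) mod 11 \<in> {0,3,6}"
  by (drule (1) cases11) auto

lemma sepX_t: "0 \<le> (t::int) \<Longrightarrow> t < 11 \<Longrightarrow> (t + -1) mod 11 \<in> {0,3,6} \<or> (t + 3) mod 11 \<in> {0,3,6} \<or> (t + -3) mod 11 \<in> {0,3,6}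
   \<or> (t + 2) mod 11 \<in> {0,3,6} \<or> (t + 4) mod 11 \<in> {0,3,6} \<or> (t + -2) mod 11 \<in> {0,3,6}"
  by (drule (1) cases11) auto

lemma sepY_t: "0 \<le> (t::int) \<Longrightarrow> t < 11 \<Longrightarrow> (t + -3) mod 11 \<in> {0,3,6} \<or> (t + 1) mod 11 \<in> {0,3,6} \<or> (t + -1) mod 11 \<in> {0,3,6}
   \<or> (t + 6) mod 11 \<in> {0,3,6} \<or> (t + 4) mod 11 \<in> {0,3,6} \<or> (t + 2) mod 11 \<in> {0,3,6}"
  by (drule (1) cases11) auto

lemma nb_iff: "(a,b) \<in> closed_nbhd (x,y) \<longleftrightarrow> \<bar>x - a\<bar> + \<bar>y - b\<bar> \<le> 1"
  by (simp add: closed_nbhd_def sq_adj_def) arith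

lemma C0_lid: "local_id_code C0"
proof -
  have nb: "p \<in> closed_nbhd u \<longleftrightarrow> p = u \<or> sq_adj u p" for p u by (simp add: closed_nbhd_def)
  have dom: "I_set C0 u \<noteq> {}" for u
  proof -
    obtain x y where u: "u = (x,y)" by (cases u)
    define t where "t = (x + 3*y) mod 11"
    have "0 \<le> t" "t < 11" by (simp_all add: t_def)
    from dom_t[OF this] have "(x+0,y+0) \<in> C0 \<or> (x+1,y+0) \<in> C0 \<or> (x+ -1,y+0) \<in> C0 \<or> (x+0,y+1) \<in> C0 \<or> (x+0,y+ -1) \<in> C0"
      unfolding C0_mem t_def by simp
    moreover have "(x+0,y+0) \<in> closed_nbhd u" "(x+1,y+0) \<in> closed_nbhd u" "(x+ -1,y+0) \<in> closed_nbhd u"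
       "(x+0,y+1) \<in> closed_nbhd u" "(x+0,y+ -1) \<in> closed_nbhd u"
      unfolding u nb by (auto simp: sq_adj_def)
    ultimately show ?thesis unfolding I_set_def by blast
  qed
  have sepX: "I_set C0 (x,y) \<noteq> I_set C0 (x+1,y)" for x y
  proof
    assume eq: "I_set C0 (x,y) = I_set C0 (x+1,y)"
    have key: "p \<in> C0 \<Longrightarrow> (p \<in> closed_nbhd (x,y) \<longleftrightarrow> p \<in> closed_nbhd (x+1,y))" for p
      using eq unfolding I_set_def by blast
    define t where "t = (x + 3*y) mod 11"
    have "0 \<le> t" "t < 11" by (simp_all add: t_def)
    from sepX_t[OF this] have "(x+ -1,y+0) \<in> C0 \<or> (x+0,y+1) \<in> C0 \<or> (x+0,y+ -1) \<in> C0 \<or> (x+2,y+0) \<in> C0 \<or> (x+1,y+1) \<in> C0 \<or> (x+1,y+ -1) \<in> C0"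
      unfolding C0_mem t_def by simp
    moreover have "(x+ -1,y+0) \<notin> C0" by (rule notI, drule key[of "(x+ -1,y+0)"], simp only: nb_iff, simp)
    moreover have "(x+0,y+1) \<notin> C0" by (rule notI, drule key[of "(x+0,y+1)"], simp only: nb_iff, simp)
    moreover have "(x+0,y+ -1) \<notin> C0" by (rule notI, drule key[of "(x+0,y+ -1)"], simp only: nb_iff, simp)
    moreover have "(x+2,y+0) \<notin> C0" by (rule notI, drule key[of "(x+2,y+0)"], simp only: nb_iff, simp)
    moreover have "(x+1,y+1) \<notin> C0" by (rule notI, drule key[of "(x+1,y+1)"], simp only: nb_iff, simp)
    moreover have "(x+1,y+ -1) \<notin> C0" by (rule notI, drule key[of "(x+1,y+ -1)"], simp only: nb_iff, simp)
    ultimately show False by blast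
  qed
  have sepY: "I_set C0 (x,y) \<noteq> I_set C0 (x,y+1)" for x y
  proof
    assume eq: "I_set C0 (x,y) = I_set C0 (x,y+1)"
    have key: "p \<in> C0 \<Longrightarrow> (p \<in> closed_nbhd (x,y) \<longleftrightarrow> p \<in> closed_nbhd (x,y+1))" for p
      using eq unfolding I_set_def by blast
    define t where "t = (x + 3*y) mod 11"
    have "0 \<le> t" "t < 11" by (simp_all add: t_def)
    from sepY_t[OF this] have "(x+0,y+ -1) \<in> C0 \<or> (x+1,y+0) \<in> C0 \<or> (x+ -1,y+0) \<in> C0 \<or> (x+0,y+2) \<in> C0 \<or> (x+1,y+1) \<in> C0 \<or> (x+ -1,y+1) \<in> C0"
      unfolding C0_mem t_def by simp
    moreover have "(x+0,y+ -1) \<notin> C0" by (rule notI, drule key[of "(x+0,y+ -1)"], simp only: nb_iff, simp)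
    moreover have "(x+1,y+0) \<notin> C0" by (rule notI, drule key[of "(x+1,y+0)"], simp only: nb_iff, simp)
    moreover have "(x+ -1,y+0) \<notin> C0" by (rule notI, drule key[of "(x+ -1,y+0)"], simp only: nb_iff, simp)
    moreover have "(x+0,y+2) \<notin> C0" by (rule notI, drule key[of "(x+0,y+2)"], simp only: nb_iff, simp)
    moreover have "(x+1,y+1) \<notin> C0" by (rule notI, drule key[of "(x+1,y+1)"], simp only: nb_iff, simp)
    moreover have "(x+ -1,y+1) \<notin> C0" by (rule notI, drule key[of "(x+ -1,y+1)"], simp only: nb_iff, simp)
    ultimately show False by blast
  qed
  have sep: "I_set C0 u \<noteq> I_set C0 v" if "sq_adj u v" for u v
  proof -
    obtain x y where u: "u = (x,y)" by (cases u)
    from that obtain d where d: "d \<in> DD" "v = mv u d" unfolding sq_adj_iff by blast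
    have s1: "I_set C0 (x-1,y) \<noteq> I_set C0 (x,y)" using sepX[of "x-1" y] by simp
    have s2: "I_set C0 (x,y-1) \<noteq> I_set C0 (x,y)" using sepY[of x "y-1"] by simp
    have "d = (1,0) \<or> d = (-1,0) \<or> d = (0,1) \<or> d = (0,-1)" using d(1) by (simp add: DD_def)
    thus ?thesis
    proof (elim disjE)
      assume "d = (1,0)" thus ?thesis using sepX[of x y] by (simp add: d(2) u mv_def)
    next
      assume "d = (-1,0)" thus ?thesis using s1 by (simp add: d(2) u mv_def)
    next
      assume "d = (0,1)" thus ?thesis using sepY[of x y] by (simp add: d(2) u mv_def)
    next
      assume "d = (0,-1)" thus ?thesis using s2 by (simp add: d(2) u mv_def)
    qed
  qed
  have "(0,0) \<in> C0" by (simp add: C0_def)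
  thus ?thesis unfolding local_id_code_def using dom sep by blast
qed

lemma inj_ar: "(a::int) div 11 = b div 11 \<Longrightarrow> (a + c) mod 11 = (b + c) mod 11 \<Longrightarrow> a = b"
proof -
  assume h1: "a div 11 = b div 11" and h2: "(a + c) mod 11 = (b + c) mod 11"
  have "((a + c) mod 11 + - c) mod 11 = (a + c + - c) mod 11" by (rule mod_add_left_eq)
  hence "a mod 11 = ((a + c) mod 11 + - c) mod 11" by simp
  also have "\<dots> = ((b + c) mod 11 + - c) mod 11" using h2 by simp
  also have "\<dots> = (b + c + - c) mod 11" by (rule mod_add_left_eq)
  also have "\<dots> = b mod 11" by simp
  finally have "a mod 11 = b mod 11" .
  thus ?thesis using h1 by (metis div_mult_mod_eq)
qed

lemma C0_upper: "real (card (C0 \<inter> Qbox n)) \<le> 3 * (2*real n+1) * (2*real n/11 + 1)"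
proof -
  define \<phi> where "\<phi> p = (snd p, nat ((fst p + int n) div 11), (fst p + 3 * snd p) mod 11)" for p :: vtx
  define T where "T = {-int n..int n} \<times> {0..(2*n) div 11} \<times> {0::int,3,6}"
  have inj: "inj_on \<phi> (C0 \<inter> Qbox n)"
  proof (rule inj_onI)
    fix p q assume p: "p \<in> C0 \<inter> Qbox n" and q: "q \<in> C0 \<inter> Qbox n" and e: "\<phi> p = \<phi> q"
    obtain x1 y1 where pp: "p = (x1,y1)" by (cases p)
    obtain x2 y2 where qq: "q = (x2,y2)" by (cases q)
    have y: "y1 = y2" using e by (simp add: \<phi>_def pp qq)
    have nn: "0 \<le> (x1 + int n) div 11" "0 \<le> (x2 + int n) div 11" using p q by (auto simp: pp qq Qbox_def)
    hence d: "(x1 + int n) div 11 = (x2 + int n) div 11" using e eq_nat_nat_iff[OF nn] by (simp add: \<phi>_def pp qq)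
    have m: "(x1 + int n + (3*y1 - int n)) mod 11 = (x2 + int n + (3*y1 - int n)) mod 11"
      using e y by (simp add: \<phi>_def pp qq)
    from inj_ar[OF d m] y show "p = q" by (simp add: pp qq)
  qed
  have sub: "\<phi> ` (C0 \<inter> Qbox n) \<subseteq> T"
  proof
    fix z assume "z \<in> \<phi> ` (C0 \<inter> Qbox n)"
    then obtain x y where xy: "(x,y) \<in> C0" "(x,y) \<in> Qbox n" and z: "z = \<phi> (x,y)" by auto
    have b: "-int n \<le> x" "x \<le> int n" "-int n \<le> y" "y \<le> int n" using xy(2) by (auto simp: Qbox_def)
    have "(x + int n) div 11 \<le> (2 * int n) div 11" using b by (intro zdiv_mono1) auto
    hence "nat ((x + int n) div 11) \<le> (2*n) div 11" by (simp add: nat_le_iff zdiv_int)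
    moreover have "(x + 3*y) mod 11 \<in> {0,3,6}" using xy(1) by (simp add: C0_def)
    ultimately show "z \<in> T" using b by (simp add: z \<phi>_def T_def)
  qed
  have "card (C0 \<inter> Qbox n) \<le> card T"
    using card_inj_on_le[OF inj sub] by (simp add: T_def)
  also have "card T = (2*n+1) * ((2*n) div 11 + 1) * 3"
  proof -
    have "nat (2 * int n + 1) = 2*n+1" by simp
    thus ?thesis by (simp add: T_def card_cartesian_product)
  qed
  finally have c: "real (card (C0 \<inter> Qbox n)) \<le> real ((2*n+1) * ((2*n) div 11 + 1) * 3)" by linarith
  have "real ((2*n) div 11) * 11 \<le> real (2*n)"
    using div_times_less_eq_dividend[of "2*n" 11] by (simp only: of_nat_mult[symmetric] of_nat_le_iff)
  hence "real ((2*n) div 11) \<le> 2*real n/11" by simp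
  hence B: "3 * (2*real n+1) * (real ((2*n) div 11) + 1) \<le> 3 * (2*real n+1) * (2*real n/11 + 1)"
    by (intro mult_left_mono) auto
  have A: "real ((2*n+1) * ((2*n) div 11 + 1) * 3) = 3 * (2*real n+1) * (real ((2*n) div 11) + 1)"
    by (simp add: algebra_simps)
  from A B have "real ((2*n+1) * ((2*n) div 11 + 1) * 3) \<le> 3 * (2*real n+1) * (2*real n/11 + 1)" by linarith
  with c show ?thesis by linarith
qed

lemma lim_g: "((\<lambda>n::nat. 3/11 * (2*real n - 1)^2 / (2*real n + 1)^2) \<longlongrightarrow> 3/11) sequentially"
  by real_asymp

lemma lim_h: "((\<lambda>n::nat. 3 * (2*real n+1) * (2*real n/11 + 1) / (2*real n + 1)^2) \<longlongrightarrow> 3/11) sequentially"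
  by real_asymp

lemma Qcard_real: "real (card (Qbox n)) = (2*real n+1)^2"
  by (simp add: Qbox_card)

lemma density_lower: assumes lid: "local_id_code C"
  shows "ereal (3/11) \<le> grid_density C"
proof -
  let ?g = "\<lambda>n::nat. 3/11 * (2*real n - 1)^2 / (2*real n + 1)^2"
  have ev: "eventually (\<lambda>n. ereal (?g n) \<le> ereal (real (card (C \<inter> Qbox n)) / real (card (Qbox n)))) sequentially"
    unfolding eventually_sequentially
  proof (intro exI allI impI)
    fix n :: nat assume "1 \<le> n"
    then obtain m where n: "n = Suc m" by (cases n) auto
    have c: "(2*real m+1)^2 \<le> 11/3 * real (card (C \<inter> Qbox n))"
      using counting[OF lid, of m] Qcard_real[of m] n by simp
    have "?g n = 3/11 * (2*real m+1)^2 / (2*real m+3)^2" by (simp add: n algebra_simps)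
    also have "\<dots> \<le> real (card (C \<inter> Qbox n)) / (2*real m+3)^2"
      using c by (intro divide_right_mono) auto
    also have "\<dots> = real (card (C \<inter> Qbox n)) / real (card (Qbox n))"
      by (simp add: Qcard_real n algebra_simps)
    finally show "ereal (?g n) \<le> ereal (real (card (C \<inter> Qbox n)) / real (card (Qbox n)))" by simp
  qed
  have "Limsup sequentially (\<lambda>n. ereal (?g n)) = ereal (3/11)"
    by (rule lim_imp_Limsup) (simp, rule tendsto_ereal[OF lim_g])
  moreover have "Limsup sequentially (\<lambda>n. ereal (?g n)) \<le> grid_density C"
    unfolding grid_density_def by (rule Limsup_mono[OF ev])
  ultimately show ?thesis by simp
qed

lemma density_C0: "grid_density C0 = ereal (3/11)"
proof (rule antisym)
  let ?h = "\<lambda>n::nat. 3 * (2*real n+1) * (2*real n/11 + 1) / (2*real n + 1)^2"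
  have ev: "eventually (\<lambda>n. ereal (real (card (C0 \<inter> Qbox n)) / real (card (Qbox n))) \<le> ereal (?h n)) sequentially"
  proof (rule always_eventually, rule allI)
    fix n
    have "real (card (C0 \<inter> Qbox n)) / (2*real n+1)^2 \<le> ?h n"
      by (rule divide_right_mono[OF C0_upper]) simp
    thus "ereal (real (card (C0 \<inter> Qbox n)) / real (card (Qbox n))) \<le> ereal (?h n)"
      by (simp only: Qcard_real ereal_less_eq)
  qed
  have "Limsup sequentially (\<lambda>n. ereal (?h n)) = ereal (3/11)"
    by (rule lim_imp_Limsup) (simp, rule tendsto_ereal[OF lim_h])
  moreover have "grid_density C0 \<le> Limsup sequentially (\<lambda>n. ereal (?h n))"
    unfolding grid_density_def by (rule Limsup_mono[OF ev])
  ultimately show "grid_density C0 \<le> ereal (3/11)" by simp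
  show "ereal (3/11) \<le> grid_density C0" by (rule density_lower[OF C0_lid])
qed

theorem mainTheorem13:
  shows "(\<forall>C. local_id_code C \<longrightarrow> grid_density C \<ge> ereal (3/11))
       \<and> (\<exists>C. local_id_code C \<and> grid_density C = ereal (3/11))
       \<and> gamma_LID_square = ereal (3/11)"
proof (intro conjI)
  show "\<forall>C. local_id_code C \<longrightarrow> grid_density C \<ge> ereal (3/11)" using density_lower by blast
  show "\<exists>C. local_id_code C \<and> grid_density C = ereal (3/11)" using C0_lid density_C0 by blast
  show "gamma_LID_square = ereal (3/11)"
    unfolding gamma_LID_square_def
  proof (rule antisym)
    show "(INF C \<in> {C. local_id_code C}. grid_density C) \<le> ereal (3/11)"
      using INF_lower[of C0 "{C. local_id_code C}" grid_density] C0_lid density_C0 by simp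
    show "ereal (3/11) \<le> (INF C \<in> {C. local_id_code C}. grid_density C)"
      by (rule INF_greatest) (use density_lower in auto)
  qed
qed

end
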